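(* Consider the unweighted tree augmentation problem where the edges $E$ of the base tree and the links $L$ arrive as a single stream in an arbitrary order. For any constant integer $t\ge 1$, any (randomized) streaming algorithm that outputs the size of a better-than-$(2t+1)$-approximate solution requires $\Omega(\gamma(n,2t+1))$ bits of space, where $\gamma(n,2t+1)$ denotes the maximum possible number of edges in an $n$-vertex graph with girth greater than $2t+1$.
   Context: Unweighted tree augmentation problem: given a spanning tree with edge set $E$ on an $n$-vertex set $V$ and a set of links $L\subseteq\binom{V}{2}$, find a minimum-cardinality $S\subseteq L$ such that $(V,E\cup S)$ is $2$-edge-connected. The randomized algorithm is required to succeed with bounded error (constant probability). *)

theory Defs
  imports "HOL-Probability.Probability"
begin

text \<open>Vertices are the naturals below n. A stream item is either an edge of the
base tree or a link; each carries its (2-element) set of endpoints.\<close>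

datatype item = TreeE "nat set" | LinkE "nat set"

fun ends :: "item \<Rightarrow> nat set" where
  "ends (TreeE e) = e"
| "ends (LinkE e) = e"

definition vpairs :: "nat \<Rightarrow> nat set set" where
  "vpairs n = {e. \<exists>u v. u < n \<and> v < n \<and> u \<noteq> v \<and> e = {u, v}}"

text \<open>Multigraph whose edges are the items in I (parallel tree edge / link are distinct).\<close>
definition adj :: "item set \<Rightarrow> (nat \<times> nat) set" where
  "adj I = {(u, v). \<exists>x\<in>I. ends x = {u, v}}"

definition connected_on :: "nat set \<Rightarrow> item set \<Rightarrow> bool" where
  "connected_on V I \<longleftrightarrow> (\<forall>u\<in>V. \<forall>v\<in>V. (u, v) \<in> (adj I)\<^sup>*)"

definition two_edge_connected :: "nat set \<Rightarrow> item set \<Rightarrow> bool" where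
  "two_edge_connected V I \<longleftrightarrow> connected_on V I \<and> (\<forall>x\<in>I. connected_on V (I - {x}))"

definition spanning_tree :: "nat \<Rightarrow> nat set set \<Rightarrow> bool" where
  "spanning_tree n E \<longleftrightarrow> E \<subseteq> vpairs n \<and> connected_on {..<n} (TreeE ` E) \<and> card E = n - 1"

definition tap_instance :: "nat \<Rightarrow> nat set set \<Rightarrow> nat set set \<Rightarrow> bool" where
  "tap_instance n E L \<longleftrightarrow> spanning_tree n E \<and> L \<subseteq> vpairs n"

definition tap_feasible :: "nat \<Rightarrow> nat set set \<Rightarrow> nat set set \<Rightarrow> nat set set \<Rightarrow> bool" where
  "tap_feasible n E L S \<longleftrightarrow> S \<subseteq> L \<and> two_edge_connected {..<n} (TreeE ` E \<union> LinkE ` S)"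

definition tap_opt :: "nat \<Rightarrow> nat set set \<Rightarrow> nat set set \<Rightarrow> nat" where
  "tap_opt n E L = Min {card S | S. tap_feasible n E L S}"

definition is_stream :: "nat set set \<Rightarrow> nat set set \<Rightarrow> item list \<Rightarrow> bool" where
  "is_stream E L xs \<longleftrightarrow> distinct xs \<and> set xs = TreeE ` E \<union> LinkE ` L"

text \<open>A deterministic streaming algorithm: initial memory state, transition on each
stream item, and output function. A randomized algorithm is a probability distribution over
deterministic ones (random bits are free, which only strengthens a lower bound).\<close>
type_synonym stream_alg = "nat \<times> (item \<Rightarrow> nat \<Rightarrow> nat) \<times> (nat \<Rightarrow> nat)"

definition space_bounded :: "nat \<Rightarrow> stream_alg \<Rightarrow> bool" where
  "space_bounded s A \<longleftrightarrow> (case A of (q0, step, out) \<Rightarrow>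
      q0 < 2 ^ s \<and> (\<forall>x q. q < 2 ^ s \<longrightarrow> step x q < 2 ^ s))"

definition run_alg :: "stream_alg \<Rightarrow> item list \<Rightarrow> nat" where
  "run_alg A xs = (case A of (q0, step, out) \<Rightarrow> out (fold step xs q0))"

definition has_cycle_of_length :: "nat set set \<Rightarrow> nat \<Rightarrow> bool" where
  "has_cycle_of_length F k \<longleftrightarrow> k \<ge> 3 \<and> (\<exists>vs. length vs = k \<and> distinct vs \<and>
      (\<forall>i<k. {vs ! i, vs ! ((i + 1) mod k)} \<in> F))"

definition girth_gt :: "nat set set \<Rightarrow> nat \<Rightarrow> bool" where
  "girth_gt F g \<longleftrightarrow> (\<forall>k. k \<le> g \<longrightarrow> \<not> has_cycle_of_length F k)"

definition gamma :: "nat \<Rightarrow> nat \<Rightarrow> nat" where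
  "gamma n g = Max {card F | F. F \<subseteq> vpairs n \<and> girth_gt F g}"

end

theory Submission
  imports Defs "HOL-Library.Transitive_Closure_Table"
begin

lemma adj_sym: "(x, y) \<in> adj J \<Longrightarrow> (y, x) \<in> adj J"
  unfolding adj_def by (auto simp: insert_commute)

lemma rtrancl_adj_sym: "(x, y) \<in> (adj J)\<^sup>* \<Longrightarrow> (y, x) \<in> (adj J)\<^sup>*"
proof (induction rule: rtrancl_induct)
  case base then show ?case by simp
next
  case (step y z)
  then show ?case using adj_sym by (meson converse_rtrancl_into_rtrancl)
qed

lemma adj_mono: "I \<subseteq> J \<Longrightarrow> adj I \<subseteq> adj J"
  unfolding adj_def by auto

lemma connected_on_mono: assumes "connected_on V I" "I \<subseteq> J" shows "connected_on V J"
proof -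
  have "(adj I)\<^sup>* \<subseteq> (adj J)\<^sup>*" using rtrancl_mono[OF adj_mono[OF assms(2)]] .
  then show ?thesis using assms(1) unfolding connected_on_def by blast
qed

lemma cut_cross:
  assumes "(a, b) \<in> (adj J)\<^sup>*" "a \<in> C" "b \<notin> C"
  shows "\<exists>y\<in>J. \<exists>p q. ends y = {p, q} \<and> p \<in> C \<and> q \<notin> C"
  using assms
proof (induction rule: rtrancl_induct)
  case base then show ?case by simp
next
  case (step y z)
  show ?case
  proof (cases "y \<in> C")
    case True
    with step show ?thesis unfolding adj_def by auto
  next
    case False
    with step show ?thesis by auto
  qed
qed

definition pedges :: "nat list \<Rightarrow> nat set set" where
  "pedges ys = (\<lambda>i. {ys ! i, ys ! Suc i}) ` {..<length ys - 1}"

locale pathc =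
  fixes n :: nat and ys :: "nat list"
  assumes dist: "distinct ys" and len: "length ys = n" and setys: "set ys = {..<n}"
    and n2: "n \<ge> 2"
begin

lemma nth_lt: "i < n \<Longrightarrow> ys ! i < n"
  using setys len nth_mem by blast

lemma ex_idx: "x < n \<Longrightarrow> \<exists>i<n. ys ! i = x"
  using setys len by (metis in_set_conv_nth lessThan_iff)

lemma nth_inj: "i < n \<Longrightarrow> j < n \<Longrightarrow> ys ! i = ys ! j \<longleftrightarrow> i = j"
  using dist len nth_eq_iff_index_eq by blast

lemma path_reach:
  assumes "\<And>k. a \<le> k \<Longrightarrow> k < b \<Longrightarrow> TreeE {ys ! k, ys ! Suc k} \<in> J" "a \<le> b"
  shows "(ys ! a, ys ! b) \<in> (adj J)\<^sup>*"
  using assms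
proof (induction b)
  case 0 then show ?case by simp
next
  case (Suc b)
  show ?case
  proof (cases "a = Suc b")
    case True then show ?thesis by simp
  next
    case False
    then have ab: "a \<le> b" using Suc by simp
    then have "(ys ! a, ys ! b) \<in> (adj J)\<^sup>*" using Suc by simp
    moreover have "(ys ! b, ys ! Suc b) \<in> adj J"
      using Suc(2)[of b] ab unfolding adj_def by force
    ultimately show ?thesis by simp
  qed
qed

lemma tree_conn: "connected_on {..<n} (TreeE ` pedges ys)"
  unfolding connected_on_def
proof (intro ballI)
  fix x y assume "x \<in> {..<n}" "y \<in> {..<n}"
  then obtain a b where a: "a < n" "ys ! a = x" and b: "b < n" "ys ! b = y"
    using ex_idx by (metis lessThan_iff)
  have st: "TreeE {ys ! k, ys ! Suc k} \<in> TreeE ` pedges ys" if "k < n - 1" for k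
    using that len unfolding pedges_def by auto
  have ra: "(ys ! 0, ys ! a) \<in> (adj (TreeE ` pedges ys))\<^sup>*"
    by (rule path_reach) (use st a in auto)
  have rb: "(ys ! 0, ys ! b) \<in> (adj (TreeE ` pedges ys))\<^sup>*"
    by (rule path_reach) (use st b in auto)
  show "(x, y) \<in> (adj (TreeE ` pedges ys))\<^sup>*"
    using rtrancl_trans[OF rtrancl_adj_sym[OF ra] rb] a b by simp
qed

lemma pedges_vpairs: "pedges ys \<subseteq> vpairs n"
proof
  fix f assume "f \<in> pedges ys"
  then obtain i where i: "i < n - 1" "f = {ys ! i, ys ! Suc i}" unfolding pedges_def using len by auto
  have "ys ! i < n" "ys ! Suc i < n" "ys ! i \<noteq> ys ! Suc i" using i nth_lt nth_inj by auto
  then show "f \<in> vpairs n" unfolding vpairs_def using i by blast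
qed

lemma card_pedges: "card (pedges ys) = n - 1"
proof -
  have "inj_on (\<lambda>i. {ys ! i, ys ! Suc i}) {..<n - 1}"
  proof (rule inj_onI)
    fix i j assume i: "i \<in> {..<n - 1}" and j: "j \<in> {..<n - 1}"
      and eq: "{ys ! i, ys ! Suc i} = {ys ! j, ys ! Suc j}"
    have ilt: "i < n" "Suc i < n" "j < n" "Suc j < n" using i j by auto
    show "i = j"
    proof (cases "ys ! i = ys ! j")
      case True then show ?thesis using ilt nth_inj by blast
    next
      case False
      then have "ys ! i = ys ! Suc j" "ys ! Suc i = ys ! j" using eq by (auto simp: doubleton_eq_iff)
      then have "i = Suc j" "Suc i = j" using ilt nth_inj by blast+
      then show ?thesis by simp
    qed
  qed
  then show ?thesis unfolding pedges_def using len by (simp add: card_image)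
qed

lemma spanning: "spanning_tree n (pedges ys)"
  unfolding spanning_tree_def using pedges_vpairs tree_conn card_pedges by auto

lemma feas_T:
  assumes "connected_on {..<n} (LinkE ` T)" "T \<subseteq> L"
  shows "two_edge_connected {..<n} (TreeE ` pedges ys \<union> LinkE ` L)"
  unfolding two_edge_connected_def
proof (intro conjI ballI)
  show "connected_on {..<n} (TreeE ` pedges ys \<union> LinkE ` L)"
    using tree_conn connected_on_mono by blast
  fix x assume "x \<in> TreeE ` pedges ys \<union> LinkE ` L"
  show "connected_on {..<n} (TreeE ` pedges ys \<union> LinkE ` L - {x})"
  proof (cases x)
    case (TreeE e)
    then have "LinkE ` T \<subseteq> TreeE ` pedges ys \<union> LinkE ` L - {x}" using assms(2) by auto
    then show ?thesis using assms(1) connected_on_mono by blast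
  next
    case (LinkE e)
    then have "TreeE ` pedges ys \<subseteq> TreeE ` pedges ys \<union> LinkE ` L - {x}" by auto
    then show ?thesis using tree_conn connected_on_mono by blast
  qed
qed


lemma conn_from0:
  assumes "\<And>a. a < n \<Longrightarrow> (ys ! 0, ys ! a) \<in> (adj J)\<^sup>*"
  shows "connected_on {..<n} J"
  unfolding connected_on_def
proof (intro ballI)
  fix x y assume "x \<in> {..<n}" "y \<in> {..<n}"
  then obtain a b where a: "a < n" "ys ! a = x" and b: "b < n" "ys ! b = y"
    using ex_idx by (metis lessThan_iff)
  show "(x, y) \<in> (adj J)\<^sup>*"
    using rtrancl_trans[OF rtrancl_adj_sym[OF assms[OF a(1)]] assms[OF b(1)]] a b by simp
qed

lemma pair_idx:
  assumes "a < n" "b < n" "k < n" "l < n" "{ys ! k, ys ! l} = {ys ! a, ys ! b}"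
  shows "(k = a \<and> l = b) \<or> (k = b \<and> l = a)"
proof -
  have "(ys ! k = ys ! a \<and> ys ! l = ys ! b) \<or> (ys ! k = ys ! b \<and> ys ! l = ys ! a)"
    using assms(5) by (auto simp: doubleton_eq_iff)
  then show ?thesis using assms(1-4) nth_inj by blast
qed

lemma pedge_mem: "k < n - 1 \<Longrightarrow> {ys ! k, ys ! Suc k} \<in> pedges ys"
  unfolding pedges_def using len by auto

lemma pedge_eq:
  assumes "k < n - 1" "i < n - 1" "{ys ! k, ys ! Suc k} = {ys ! i, ys ! Suc i}"
  shows "k = i"
proof -
  have "Suc i < n" "Suc k < n" using assms(1,2) by auto
  then have "(k = i \<and> Suc k = Suc i) \<or> (k = Suc i \<and> Suc k = i)"
    using pair_idx[of i "Suc i" k "Suc k"] assms(3) by auto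
  then show ?thesis by auto
qed

lemma cycle_2ec: "two_edge_connected {..<n} (TreeE ` pedges ys \<union> {LinkE {ys ! 0, ys ! (n - 1)}})"
  unfolding two_edge_connected_def
proof (intro conjI ballI)
  show "connected_on {..<n} (TreeE ` pedges ys \<union> {LinkE {ys ! 0, ys ! (n - 1)}})"
    using tree_conn connected_on_mono by blast
  fix x assume x: "x \<in> TreeE ` pedges ys \<union> {LinkE {ys ! 0, ys ! (n - 1)}}"
  define J where "J = TreeE ` pedges ys \<union> {LinkE {ys ! 0, ys ! (n - 1)}} - {x}"
  show "connected_on {..<n} J"
  proof (cases x)
    case (LinkE e)
    then have "TreeE ` pedges ys \<subseteq> J" unfolding J_def by auto
    then show ?thesis using tree_conn connected_on_mono by blast
  next
    case (TreeE e)
    then obtain i where i: "i < n - 1" "x = TreeE {ys ! i, ys ! Suc i}"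
      using x len unfolding pedges_def by auto
    have inJ: "TreeE {ys ! k, ys ! Suc k} \<in> J" if "k < n - 1" "k \<noteq> i" for k
      using that pedge_mem pedge_eq[OF that(1) i(1)] i unfolding J_def by auto
    have lJ: "LinkE {ys ! 0, ys ! (n - 1)} \<in> J" using i unfolding J_def by auto
    have lk: "(ys ! (n - 1), ys ! 0) \<in> adj J"
      unfolding adj_def by (rule CollectI, simp, rule bexI[OF _ lJ], simp add: insert_commute)
    show ?thesis
    proof (rule conn_from0)
      fix a assume a: "a < n"
      show "(ys ! 0, ys ! a) \<in> (adj J)\<^sup>*"
      proof (cases "a \<le> i")
        case True
        show ?thesis by (rule path_reach) (use True i inJ in auto)
      next
        case False
        have "(ys ! a, ys ! (n - 1)) \<in> (adj J)\<^sup>*"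
          by (rule path_reach) (use False i a inJ in auto)
        then have "(ys ! (n - 1), ys ! a) \<in> (adj J)\<^sup>*" by (rule rtrancl_adj_sym)
        then show ?thesis using lk
          by (meson adj_sym converse_rtrancl_into_rtrancl)
      qed
    qed
  qed
qed

lemma cross:
  assumes tec: "two_edge_connected {..<n} (TreeE ` pedges ys \<union> LinkE ` S)"
    and Sv: "S \<subseteq> vpairs n" and i: "i < n - 1"
  shows "\<exists>f\<in>S. \<exists>a b. a \<le> i \<and> i < b \<and> b < n \<and> f = {ys ! a, ys ! b}"
proof -
  define x where "x = TreeE {ys ! i, ys ! Suc i}"
  have xI: "x \<in> TreeE ` pedges ys \<union> LinkE ` S" using pedge_mem i x_def by auto
  define J where "J = TreeE ` pedges ys \<union> LinkE ` S - {x}"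
  have "connected_on {..<n} J" using tec xI unfolding two_edge_connected_def J_def by blast
  then have r: "(ys ! 0, ys ! (n - 1)) \<in> (adj J)\<^sup>*"
    unfolding connected_on_def using nth_lt n2 by auto
  define C where "C = (\<lambda>a. ys ! a) ` {..i}"
  have c0: "ys ! 0 \<in> C" unfolding C_def by auto
  have c1: "ys ! (n - 1) \<notin> C"
  proof
    assume "ys ! (n - 1) \<in> C"
    then obtain a where ai: "a \<le> i" and eq: "ys ! a = ys ! (n - 1)" unfolding C_def by auto
    have "a < n" "n - 1 < n" using ai i n2 by auto
    then have "a = n - 1" using nth_inj eq by blast
    then show False using ai i by auto
  qed
  obtain y p q where y: "y \<in> J" "ends y = {p, q}" "p \<in> C" "q \<notin> C"
    using cut_cross[OF r c0 c1] by blast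
  obtain a where a: "a \<le> i" "p = ys ! a" using y(3) unfolding C_def by auto
  have endsv: "ends y \<in> vpairs n"
    using y(1) Sv pedges_vpairs unfolding J_def by auto
  have "q < n"
  proof -
    obtain u v where "u < n" "v < n" "ends y = {u, v}" using endsv unfolding vpairs_def by blast
    then show ?thesis using y(2) by (auto simp: doubleton_eq_iff)
  qed
  then obtain b where b: "b < n" "q = ys ! b" using ex_idx by blast
  have ib: "i < b"
  proof (rule ccontr)
    assume "\<not> i < b"
    then have "q \<in> C" using b unfolding C_def by auto
    then show False using y(4) by simp
  qed
  have an: "a < n" using a i by auto
  show ?thesis
  proof (cases y)
    case (TreeE f)
    then have "f \<in> pedges ys" "y \<noteq> x" using y(1) unfolding J_def by auto
    then obtain k where k: "k < n - 1" "f = {ys ! k, ys ! Suc k}" unfolding pedges_def using len by auto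
    have "{ys ! k, ys ! Suc k} = {ys ! a, ys ! b}" using k TreeE y(2) a b by simp
    then have "(k = a \<and> Suc k = b) \<or> (k = b \<and> Suc k = a)"
      using pair_idx[of a b k "Suc k"] an b k by auto
    then have "k = i" using a ib by auto
    then show ?thesis using \<open>y \<noteq> x\<close> TreeE k x_def by simp
  next
    case (LinkE f)
    then have "f \<in> S" using y(1) unfolding J_def by auto
    moreover have "f = {ys ! a, ys ! b}" using LinkE y(2) a b by simp
    ultimately show ?thesis using a ib b by blast
  qed
qed

lemma level_bound:
  assumes tec: "two_edge_connected {..<n} (TreeE ` pedges ys \<union> LinkE ` S)"
    and Sv: "S \<subseteq> vpairs n" and fS: "finite S"
    and srt: "sorted (map lev ys)" and l0: "lev (ys ! 0) = 0" and l1: "lev (ys ! (n - 1)) \<ge> Suc (2 * t)"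
    and lip: "\<And>f x y. f \<in> S \<Longrightarrow> f = {x, y} \<Longrightarrow> lev x \<le> Suc (lev y)"
  shows "card S \<ge> Suc (2 * t)"
proof -
  have mono: "lev (ys ! a) \<le> lev (ys ! b)" if "a \<le> b" "b < n" for a b
    using srt that len unfolding sorted_iff_nth_mono by auto
  have ex: "\<exists>f\<in>S. \<exists>x y. f = {x, y} \<and> lev x = j \<and> lev y = Suc j" if j: "j \<le> 2 * t" for j
  proof -
    define p where "p = (LEAST p. j < lev (ys ! p))"
    have pex: "j < lev (ys ! (n - 1))" using l1 j by auto
    have p1: "j < lev (ys ! p)" unfolding p_def using pex by (rule LeastI)
    have p2: "p \<le> n - 1" unfolding p_def using pex by (rule Least_le)
    have p0: "p \<noteq> 0" using p1 l0 by (metis not_less0 p1 zero_less_iff_neq_zero l0 less_nat_zero_code)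
    define i where "i = p - 1"
    have i1: "i < n - 1" using p2 p0 i_def by auto
    have i2: "lev (ys ! i) \<le> j"
    proof -
      have "i < p" using p0 i_def by auto
      then have "\<not> j < lev (ys ! i)" unfolding p_def by (rule not_less_Least)
      then show ?thesis by simp
    qed
    obtain f a b where f: "f \<in> S" "a \<le> i" "i < b" "b < n" "f = {ys ! a, ys ! b}"
      using cross[OF tec Sv i1] by blast
    have la: "lev (ys ! a) \<le> j" using mono[of a i] f i1 i2 by auto
    have "p \<le> b" using f(3) i_def p0 by auto
    then have lb: "j < lev (ys ! b)" using mono[of p b] f(4) p1 by auto
    have "lev (ys ! b) \<le> Suc (lev (ys ! a))" using lip[OF f(1), of "ys ! b" "ys ! a"] f(5) by (auto simp: insert_commute)
    then have "lev (ys ! a) = j \<and> lev (ys ! b) = Suc j" using la lb by auto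
    then show ?thesis using f by blast
  qed
  define g where "g j = (SOME f. f \<in> S \<and> (\<exists>x y. f = {x, y} \<and> lev x = j \<and> lev y = Suc j))" for j
  have g: "g j \<in> S \<and> (\<exists>x y. g j = {x, y} \<and> lev x = j \<and> lev y = Suc j)" if "j \<le> 2 * t" for j
    unfolding g_def using someI_ex[OF ex[OF that, unfolded Bex_def]] by blast
  have "inj_on g {..2 * t}"
  proof (rule inj_onI)
    fix j j' assume j: "j \<in> {..2 * t}" and j': "j' \<in> {..2 * t}" and eq: "g j = g j'"
    obtain x y where xy: "g j = {x, y}" "lev x = j" "lev y = Suc j" using g[of j] j by auto
    obtain x' y' where xy': "g j' = {x', y'}" "lev x' = j'" "lev y' = Suc j'" using g[of j'] j' by auto
    have "{x, y} = {x', y'}" using xy(1) xy'(1) eq by simp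
    then have "(x = x' \<and> y = y') \<or> (x = y' \<and> y = x')" by (simp add: doubleton_eq_iff)
    then show "j = j'"
    proof (elim disjE)
      assume "x = x' \<and> y = y'" then show ?thesis using xy(2) xy'(2) by simp
    next
      assume "x = y' \<and> y = x'"
      then have "j = Suc j'" "j' = Suc j" using xy(2,3) xy'(2,3) by simp_all
      then show ?thesis by simp
    qed
  qed
  moreover have "g ` {..2 * t} \<subseteq> S"
  proof (rule image_subsetI)
    fix j assume "j \<in> {..2 * t}" then show "g j \<in> S" using g[of j] by simp
  qed
  ultimately have "card {..2 * t} \<le> card S" by (rule card_inj_on_le[OF _ _ fS])
  then show ?thesis by simp
qed

end

definition mkys :: "nat \<Rightarrow> nat \<Rightarrow> nat \<Rightarrow> (nat \<Rightarrow> nat) \<Rightarrow> nat list" where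
  "mkys n u v lv = u # sort_key lv (filter (\<lambda>x. x \<noteq> u \<and> x \<noteq> v) [0..<n]) @ [v]"

lemma mkys_props:
  assumes un: "u < n" and vn: "v < n" and uv: "u \<noteq> v" and lu: "lv u = 0" and lvv: "\<And>x. lv x \<le> lv v"
  shows "pathc n (mkys n u v lv)" "mkys n u v lv ! 0 = u" "mkys n u v lv ! (n - 1) = v"
    "sorted (map lv (mkys n u v lv))"
proof -
  define mid where "mid = sort_key lv (filter (\<lambda>x. x \<noteq> u \<and> x \<noteq> v) [0..<n])"
  have ys: "mkys n u v lv = u # mid @ [v]" unfolding mkys_def mid_def by simp
  have dmid: "distinct mid" unfolding mid_def by (simp add: distinct_sort)
  have smid: "set mid = {..<n} - {u, v}" unfolding mid_def by (auto simp: set_sort)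
  have d: "distinct (mkys n u v lv)" using ys dmid smid uv by auto
  have s: "set (mkys n u v lv) = {..<n}" using ys smid un vn by auto
  have l: "length (mkys n u v lv) = n" using distinct_card[OF d] s by simp
  have n2: "n \<ge> 2" using un vn uv by linarith
  show "pathc n (mkys n u v lv)" by (unfold_locales) (use d l s n2 in auto)
  show "mkys n u v lv ! 0 = u" using ys by simp
  show "mkys n u v lv ! (n - 1) = v"
  proof -
    have "length (u # mid) = n - 1" using l ys by simp
    then show ?thesis using ys by (metis append_Cons nth_append_length)
  qed
  have "sorted (map lv mid)" unfolding mid_def by simp
  then show "sorted (map lv (mkys n u v lv))" using ys lu lvv
    by (auto simp: sorted_append)
qed

lemma finite_vpairs: "finite (vpairs n)"
proof -
  have "vpairs n \<subseteq> Pow {..<n}" unfolding vpairs_def by auto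
  then show ?thesis by (rule finite_subset) simp
qed

locale inst =
  fixes n t :: nat and T L :: "nat set set" and u v :: nat and lev :: "nat \<Rightarrow> nat"
  assumes un: "u < n" and vn: "v < n" and uv: "u \<noteq> v"
    and lu: "lev u = 0" and lvv: "lev v \<ge> Suc (2 * t)"
    and TL: "T \<subseteq> L" and Lv: "L \<subseteq> vpairs n"
    and Tc: "connected_on {..<n} (LinkE ` T)"
begin

definition lv where "lv x = min (lev x) (Suc (2 * t))"
definition ys where "ys = mkys n u v lv"
definition E where "E = pedges ys"

lemma lv_props: "lv u = 0" "\<And>x. lv x \<le> lv v" "lv v = Suc (2 * t)"
  unfolding lv_def using lu lvv by auto

lemma ys_props: "pathc n ys" "ys ! 0 = u" "ys ! (n - 1) = v" "sorted (map lv ys)"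
  unfolding ys_def using mkys_props[OF un vn uv lv_props(1,2)] by auto

interpretation P: pathc n ys by (rule ys_props(1))

lemma finL: "finite L" using Lv finite_vpairs finite_subset by blast

lemma inst_ok: "tap_instance n E L"
  unfolding tap_instance_def E_def using P.spanning Lv by simp

lemma feasible: "tap_feasible n E L L"
  unfolding tap_feasible_def E_def using P.feas_T[OF Tc TL] by simp

lemma fin_cards: "finite {card S | S. tap_feasible n E L S}"
proof -
  have "{card S | S. tap_feasible n E L S} \<subseteq> card ` Pow L"
    unfolding tap_feasible_def by auto
  then show ?thesis using finL by (meson finite_Pow_iff finite_imageI finite_subset)
qed

lemma opt_le1: assumes "{u, v} \<in> L" shows "tap_opt n E L \<le> 1"
proof -
  have "tap_feasible n E L {{u, v}}"
    unfolding tap_feasible_def E_def using assms P.cycle_2ec ys_props(2,3) by simp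
  then have "card {{u, v}} \<in> {card S | S. tap_feasible n E L S}" by blast
  then have "tap_opt n E L \<le> card {{u, v}}" unfolding tap_opt_def using fin_cards by (rule Min_le[rotated])
  then show ?thesis by simp
qed

lemma opt_ge: assumes "\<And>f x y. f \<in> L \<Longrightarrow> f = {x, y} \<Longrightarrow> lev x \<le> Suc (lev y)"
  shows "tap_opt n E L \<ge> Suc (2 * t)"
proof -
  have all: "card S \<ge> Suc (2 * t)" if "tap_feasible n E L S" for S
  proof -
    have SL: "S \<subseteq> L" and tec: "two_edge_connected {..<n} (TreeE ` pedges ys \<union> LinkE ` S)"
      using that unfolding tap_feasible_def E_def by auto
    have lip: "lv x \<le> Suc (lv y)" if "f \<in> S" "f = {x, y}" for f x y
      using assms[of f x y] that SL unfolding lv_def by auto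
    show ?thesis
      by (rule P.level_bound[OF tec _ _ ys_props(4), of t])
         (use SL Lv finL finite_subset lip ys_props lv_props in auto)
  qed
  have ne: "{card S | S. tap_feasible n E L S} \<noteq> {}" using feasible by blast
  show ?thesis unfolding tap_opt_def using fin_cards ne all by (auto simp: Min_ge_iff)
qed

end

lemma avg_pmf:
  fixes P :: "'a pmf" and X :: "'b set" and Q :: "'a \<Rightarrow> 'b \<Rightarrow> bool"
  assumes fX: "finite X" and pr: "\<And>x. x \<in> X \<Longrightarrow> measure_pmf.prob P {A. Q A x} \<ge> 2 / 3"
  shows "\<exists>A\<in>set_pmf P. 3 * card {x\<in>X. Q A x} \<ge> 2 * card X"
proof (rule ccontr)
  assume "\<not> ?thesis"
  then have lt: "\<And>A. A \<in> set_pmf P \<Longrightarrow> 3 * card {x\<in>X. Q A x} < 2 * card X" by auto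
  define f where "f A = (\<Sum>x\<in>X. indicator {A. Q A x} A :: real)" for A
  have fc: "f A = real (card {x\<in>X. Q A x})" for A
  proof -
    have "f A = (\<Sum>x\<in>X. if Q A x then 1 else 0)" unfolding f_def by (auto intro!: sum.cong simp: indicator_def)
    also have "\<dots> = real (card (X \<inter> Collect (Q A)))" using fX by (simp add: sum.If_cases)
    also have "X \<inter> Collect (Q A) = {x\<in>X. Q A x}" by auto
    finally show ?thesis .
  qed
  have int: "integrable (measure_pmf P) (\<lambda>A. indicator {A. Q A x} A :: real)" for x
    by (rule measure_pmf.integrable_const_bound[where B=1]) (auto simp: indicator_def)
  have "measure_pmf.expectation P f = (\<Sum>x\<in>X. measure_pmf.expectation P (\<lambda>A. indicator {A. Q A x} A :: real))"
    unfolding f_def by (rule Bochner_Integration.integral_sum[where I=X and f="\<lambda>x A. indicator {A. Q A x} A :: real"]) (use int in auto)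
  also have "\<dots> = (\<Sum>x\<in>X. measure_pmf.prob P {A. Q A x})" by simp
  also have "\<dots> \<ge> (\<Sum>x\<in>X. 2 / 3)" using pr by (intro sum_mono) auto
  finally have ge: "measure_pmf.expectation P f \<ge> 2 / 3 * real (card X)" by simp
  have "measure_pmf.expectation P f \<le> measure_pmf.expectation P (\<lambda>A. (2 * real (card X) - 1) / 3)"
  proof (rule integral_mono_AE)
    show "integrable (measure_pmf P) f" unfolding f_def using int by auto
    show "integrable (measure_pmf P) (\<lambda>A. (2 * real (card X) - 1) / 3)" by simp
    show "AE A in measure_pmf P. f A \<le> (2 * real (card X) - 1) / 3"
      unfolding AE_measure_pmf_iff
    proof
      fix A assume "A \<in> set_pmf P"
      then have "3 * card {x\<in>X. Q A x} + 1 \<le> 2 * card X" using lt by fastforce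
      then have "3 * real (card {x\<in>X. Q A x}) + 1 \<le> 2 * real (card X)" by linarith
      then show "f A \<le> (2 * real (card X) - 1) / 3" unfolding fc by simp
    qed
  qed
  also have "\<dots> = (2 * real (card X) - 1) / 3" by simp
  finally show False using ge by simp
qed


lemma binom_tail:
  assumes "r \<le> m"
  shows "(\<Sum>k\<le>r. m choose k) * 2 ^ (m - r) \<le> (3::nat) ^ m"
proof -
  have "(\<Sum>k\<le>r. m choose k) * 2 ^ (m - r) = (\<Sum>k\<le>r. (m choose k) * 2 ^ (m - r))"
    by (simp add: sum_distrib_right)
  also have "\<dots> \<le> (\<Sum>k\<le>r. (m choose k) * 2 ^ (m - k))"
    by (intro sum_mono mult_left_mono power_increasing) auto
  also have "\<dots> \<le> (\<Sum>k\<le>m. (m choose k) * 2 ^ (m - k))"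
    by (rule sum_mono2) (use assms in auto)
  also have "\<dots> = (1 + 2) ^ m" by (subst binomial_ring) simp
  finally show ?thesis by (simp add: numeral_3_eq_3)
qed

lemma card_small_subsets:
  assumes "finite M"
  shows "card {D. D \<subseteq> M \<and> card D \<le> r} \<le> (\<Sum>k\<le>r. card M choose k)"
proof -
  have "{D. D \<subseteq> M \<and> card D \<le> r} = (\<Union>k\<in>{..r}. {D. D \<subseteq> M \<and> card D = k})" by auto
  then have "card {D. D \<subseteq> M \<and> card D \<le> r} \<le> (\<Sum>k\<le>r. card {D. D \<subseteq> M \<and> card D = k})"
    by (simp add: card_UN_le)
  also have "\<dots> = (\<Sum>k\<le>r. card M choose k)" using n_subsets[OF assms] by simp
  finally show ?thesis .
qed

lemma pw8: "((a::nat) ^ k) ^ 8 = (a ^ 8) ^ k"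
  by (metis power_mult mult.commute)

lemma count_bound:
  fixes M :: "'e set" and st :: "'e set \<Rightarrow> nat" and g :: "nat \<Rightarrow> 'e \<Rightarrow> bool"
  assumes fM: "finite M" and stb: "\<And>F. F \<subseteq> M \<Longrightarrow> st F < 2 ^ s"
    and big: "3 * card {(F, e) \<in> Pow M \<times> M. g (st F) e = (e \<in> F)} \<ge> 2 * card (Pow M \<times> M)"
  shows "(8192::nat) ^ card M \<le> 9 ^ 8 * 256 ^ s * 6561 ^ card M"
proof -
  define m where "m = card M"
  define r where "r = 3 * m div 8"
  define a where "a F = card {e\<in>M. g (st F) e = (e \<in> F)}" for F
  define d where "d F = card {e\<in>M. g (st F) e \<noteq> (e \<in> F)}" for F
  define Good where "Good = {F\<in>Pow M. d F \<le> r}"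
  define N where "N = (2::nat) ^ m"
  have ad: "a F + d F = m" for F
  proof -
    have "{e\<in>M. g (st F) e = (e \<in> F)} \<union> {e\<in>M. g (st F) e \<noteq> (e \<in> F)} = M" by auto
    moreover have "{e\<in>M. g (st F) e = (e \<in> F)} \<inter> {e\<in>M. g (st F) e \<noteq> (e \<in> F)} = {}" by auto
    ultimately show ?thesis unfolding a_def d_def m_def using fM
      by (metis (no_types, lifting) card_Un_disjoint finite_Un)
  qed
  have cPow: "card (Pow M) = N" unfolding N_def m_def using fM by (simp add: card_Pow)
  have fG: "finite Good" unfolding Good_def using fM by auto
  have GP: "Good \<subseteq> Pow M" unfolding Good_def by auto
  have gN: "card Good \<le> N" using card_mono[OF _ GP] fM cPow by simp
  have sumA: "card {(F, e) \<in> Pow M \<times> M. g (st F) e = (e \<in> F)} = (\<Sum>F\<in>Pow M. a F)"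
  proof -
    have "{(F, e) \<in> Pow M \<times> M. g (st F) e = (e \<in> F)} = Sigma (Pow M) (\<lambda>F. {e\<in>M. g (st F) e = (e \<in> F)})"
      by auto
    then show ?thesis unfolding a_def using fM by (simp add: card_SigmaI)
  qed
  have sumle: "(\<Sum>F\<in>Pow M. a F) \<le> (\<Sum>F\<in>Pow M. if F \<in> Good then m else m - Suc r)"
  proof (rule sum_mono)
    fix F assume "F \<in> Pow M"
    show "a F \<le> (if F \<in> Good then m else m - Suc r)"
      using ad[of F] \<open>F \<in> Pow M\<close> unfolding Good_def by auto
  qed
  also have "\<dots> = card Good * m + (N - card Good) * (m - Suc r)"
  proof -
    have "(\<Sum>F\<in>Pow M. if F \<in> Good then m else m - Suc r)
        = (\<Sum>F\<in>Good. m) + (\<Sum>F\<in>Pow M - Good. m - Suc r)"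
    proof -
      have e1: "Pow M \<inter> Good = Good" "Good \<inter> Pow M = Good" using GP by auto
      have e2: "Pow M \<inter> - Good = Pow M - Good" "- Good \<inter> Pow M = Pow M - Good" by auto
      show ?thesis by (subst sum.If_cases) (use fM in \<open>simp_all add: e1 e2\<close>)
    qed
    also have "\<dots> = card Good * m + (N - card Good) * (m - Suc r)"
      using fM GP cPow fG by (simp add: card_Diff_subset)
    finally show ?thesis .
  qed
  finally have sA: "(\<Sum>F\<in>Pow M. a F) \<le> card Good * m + (N - card Good) * (m - Suc r)" .
  have cPM: "card (Pow M \<times> M) = N * m" using cPow fM m_def by (simp add: card_cartesian_product)
  have key: "2 * N * m \<le> 3 * (card Good * m + (N - card Good) * (m - Suc r))"
    using big sumA sA cPM by (simp add: mult.assoc)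
  show ?thesis
  proof (cases "m = 0")
    case True
    then show ?thesis unfolding m_def[symmetric] by simp
  next
    case False
    have r8: "8 * r \<le> 3 * m" "3 * m \<le> 8 * r + 7" unfolding r_def by auto
    have rm: "Suc r \<le> m" using r8 False by linarith
    define G where "G = card Good"
    have key': "2 * int N * int m \<le> 3 * (int G * int m + (int N - int G) * (int m - int r - 1))"
    proof -
      have k1: "int (2 * N * m) \<le> int (3 * (G * m + (N - G) * (m - Suc r)))"
        using key unfolding G_def by (simp only: of_nat_le_iff)
      have e1: "int (N - G) = int N - int G" using gN G_def by simp
      have e2: "int (m - Suc r) = int m - int r - 1" using rm by simp
      show ?thesis using k1 unfolding of_nat_mult of_nat_add e1 e2 by simp
    qed
    then have "int N * (3 * int r + 3 - int m) \<le> 3 * int G * (int r + 1)"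
      by (simp add: algebra_simps)
    then have "int N * (int m + 3) \<le> 3 * int G * (3 * int m + 8)"
    proof -
      assume h: "int N * (3 * int r + 3 - int m) \<le> 3 * int G * (int r + 1)"
      have "int N * (int m + 3) \<le> int N * (8 * (3 * int r + 3 - int m))"
        using r8 by (intro mult_left_mono) auto
      also have "\<dots> = 8 * (int N * (3 * int r + 3 - int m))" by (simp add: algebra_simps)
      also have "\<dots> \<le> 8 * (3 * int G * (int r + 1))" using h by linarith
      also have "\<dots> \<le> 3 * int G * (3 * int m + 8)"
      proof -
        have "int r * 8 \<le> int m * 3" using r8 by linarith
        then have "int G * (int r * 8) \<le> int G * (int m * 3)" by (intro mult_left_mono) auto
        then show ?thesis by (simp add: algebra_simps)
      qed
      finally show ?thesis .
    qed
    also have "\<dots> \<le> 9 * int G * (int m + 3)" by (simp add: algebra_simps)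
    finally have "int N * (int m + 3) \<le> (9 * int G) * (int m + 3)" .
    then have "int N \<le> 9 * int G" by (rule mult_right_le_imp_le) simp
    then have NG: "N \<le> 9 * G" by linarith
    define h where "h F = (st F, {e\<in>M. g (st F) e \<noteq> (e \<in> F)})" for F
    have inj: "inj_on h Good"
    proof (rule inj_onI)
      fix F F' assume F: "F \<in> Good" and F': "F' \<in> Good" and eq: "h F = h F'"
      have qD: "st F = st F' \<and> {e\<in>M. g (st F) e \<noteq> (e \<in> F)} = {e\<in>M. g (st F') e \<noteq> (e \<in> F')}"
        using eq unfolding h_def by (rule iffD1[OF prod.inject])
      have q: "st F = st F'" using qD by (rule conjunct1)
      have D: "{e\<in>M. g (st F) e \<noteq> (e \<in> F)} = {e\<in>M. g (st F') e \<noteq> (e \<in> F')}"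
        using qD by (rule conjunct2)
      have "F \<subseteq> M" "F' \<subseteq> M" using F F' unfolding Good_def by auto
      show "F = F'"
      proof (rule set_eqI)
        fix e
        show "e \<in> F \<longleftrightarrow> e \<in> F'"
        proof (cases "e \<in> M")
          case True
          have "(e \<in> {e\<in>M. g (st F) e \<noteq> (e \<in> F)}) = (e \<in> {e\<in>M. g (st F') e \<noteq> (e \<in> F')})"
            using D by simp
          then have "(g (st F) e \<noteq> (e \<in> F)) = (g (st F) e \<noteq> (e \<in> F'))" using True q by simp
          then show ?thesis by blast
        next
          case False
          then show ?thesis using \<open>F \<subseteq> M\<close> \<open>F' \<subseteq> M\<close> by auto
        qed
      qed
    qed
    have himg: "h ` Good \<subseteq> {..<2 ^ s} \<times> {D. D \<subseteq> M \<and> card D \<le> r}"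
      unfolding h_def Good_def d_def using stb by auto
    have "G \<le> card ({..<(2::nat) ^ s} \<times> {D. D \<subseteq> M \<and> card D \<le> r})"
      unfolding G_def using card_inj_on_le[OF inj himg] fM by (simp add: finite_cartesian_product)
    also have "\<dots> = 2 ^ s * card {D. D \<subseteq> M \<and> card D \<le> r}" by (simp add: card_cartesian_product)
    also have "\<dots> \<le> 2 ^ s * (\<Sum>k\<le>r. m choose k)"
      using card_small_subsets[OF fM, of r] unfolding m_def by simp
    finally have GB: "G \<le> 2 ^ s * (\<Sum>k\<le>r. m choose k)" .
    have "N * 2 ^ (m - r) \<le> 9 * G * 2 ^ (m - r)" using NG by simp
    also have "\<dots> \<le> 9 * (2 ^ s * (\<Sum>k\<le>r. m choose k)) * 2 ^ (m - r)" using GB by simp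
    also have "\<dots> = 9 * 2 ^ s * ((\<Sum>k\<le>r. m choose k) * 2 ^ (m - r))" by simp
    also have "\<dots> \<le> 9 * 2 ^ s * 3 ^ m" using binom_tail[of r m] rm by simp
    finally have main: "2 ^ m * 2 ^ (m - r) \<le> 9 * 2 ^ s * (3::nat) ^ m" unfolding N_def .
    have "(8192::nat) ^ m = 2 ^ (13 * m)" by (simp add: power_mult)
    also have "\<dots> \<le> 2 ^ (8 * (m + (m - r)))" by (rule power_increasing) (use r8 rm in auto)
    also have "\<dots> = (2 ^ (m + (m - r))) ^ 8" by (simp only: power_mult mult.commute)
    also have "\<dots> = (2 ^ m * 2 ^ (m - r)) ^ 8" by (simp only: power_add)
    also have "\<dots> \<le> (9 * 2 ^ s * 3 ^ m) ^ 8" using main by (rule power_mono) simp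
    also have "\<dots> = 9 ^ 8 * (2 ^ s) ^ 8 * (3 ^ m) ^ 8" by (simp only: power_mult_distrib)
    also have "\<dots> = 9 ^ 8 * 256 ^ s * 6561 ^ m" by (simp only: pw8) simp
    finally show ?thesis unfolding m_def .
  qed
qed


definition Eof :: "nat \<Rightarrow> nat \<Rightarrow> nat \<Rightarrow> nat \<Rightarrow> (nat \<Rightarrow> nat) \<Rightarrow> nat set set" where
  "Eof n t u v lev = pedges (mkys n u v (\<lambda>x. min (lev x) (Suc (2 * t))))"

context inst
begin
lemma E_eq: "E = Eof n t u v lev"
  unfolding E_def ys_def lv_def Eof_def ..
end

definition lst :: "'a set \<Rightarrow> 'a list" where
  "lst S = (SOME xs. set xs = S \<and> distinct xs)"

lemma lst: "finite S \<Longrightarrow> set (lst S) = S \<and> distinct (lst S)"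
  unfolding lst_def using someI_ex[OF finite_distinct_list] by blast

lemma fold_bounded:
  assumes "\<forall>x q. q < 2 ^ s \<longrightarrow> step x q < (2::nat) ^ s" "q < 2 ^ s"
  shows "fold step xs q < 2 ^ s"
  using assms(2)
proof (induction xs arbitrary: q)
  case Nil then show ?case by simp
next
  case (Cons x xs) then show ?case using assms(1) by simp
qed

lemma machinery:
  fixes n t s :: nat and P :: "stream_alg pmf" and M T :: "nat set set"
    and U V :: "nat set \<Rightarrow> nat" and Lev :: "nat set \<Rightarrow> nat \<Rightarrow> nat"
  assumes MT: "M \<inter> T = {}" and Mv: "M \<subseteq> vpairs n" and Tv: "T \<subseteq> vpairs n"
    and Tc: "connected_on {..<n} (LinkE ` T)"
    and lev: "\<And>e. e \<in> M \<Longrightarrow> e = {U e, V e} \<and> U e < n \<and> V e < n \<and> U e \<noteq> V e \<and> Lev e (U e) = 0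
        \<and> Lev e (V e) \<ge> Suc (2 * t)
        \<and> (\<forall>f\<in>(M \<union> T) - {e}. \<forall>x y. f = {x, y} \<longrightarrow> Lev e x \<le> Suc (Lev e y))"
    and sb: "\<forall>A\<in>set_pmf P. space_bounded s A"
    and corr: "\<forall>E L xs. tap_instance n E L \<and> tap_feasible n E L L \<and> is_stream E L xs \<longrightarrow>
         measure_pmf.prob P {A. tap_opt n E L \<le> run_alg A xs \<and>
                                 run_alg A xs < (2 * t + 1) * tap_opt n E L} \<ge> 2 / 3"
  shows "(8192::nat) ^ card M \<le> 9 ^ 8 * 256 ^ s * 6561 ^ card M"
proof -
  have fM: "finite M" using Mv finite_vpairs finite_subset by blast
  have fT: "finite T" using Tv finite_vpairs finite_subset by blast
  define Eb where "Eb e = Eof n t (U e) (V e) (Lev e)" for e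
  define alice where "alice F = map LinkE (lst (F \<union> T))" for F
  define bob where "bob e = map TreeE (lst (Eb e))" for e
  define ev where "ev A x = (case x of (F, e) \<Rightarrow>
      tap_opt n (Eb e) (F \<union> T) \<le> run_alg A (alice F @ bob e) \<and>
      run_alg A (alice F @ bob e) < (2 * t + 1) * tap_opt n (Eb e) (F \<union> T))" for A x
  define X where "X = Pow M \<times> M"
  have fX: "finite X" unfolding X_def using fM by simp
  have I: "inst n t T (F \<union> T) (U e) (V e) (Lev e)" if "F \<subseteq> M" "e \<in> M" for F e
    using lev[OF that(2)] that(1) Mv Tv Tc by unfold_locales auto
  have Eb_eq: "inst.E n t (U e) (V e) (Lev e) = Eb e" if "F \<subseteq> M" "e \<in> M" for F e
    using inst.E_eq[OF I[OF that]] unfolding Eb_def by simp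
  have fin_Eb: "finite (Eb e)" for e
    unfolding Eb_def Eof_def pedges_def by simp
  have stream: "is_stream (Eb e) (F \<union> T) (alice F @ bob e)" if "F \<subseteq> M" for F e
  proof -
    have fFT: "finite (F \<union> T)" using that fM fT finite_subset by blast
    show ?thesis unfolding is_stream_def alice_def bob_def
      using lst[OF fFT] lst[OF fin_Eb[of e]] by (auto simp: distinct_map inj_on_def)
  qed
  have pr: "measure_pmf.prob P {A. ev A x} \<ge> 2 / 3" if xX: "x \<in> X" for x
  proof -
    obtain F e where x: "x = (F, e)" "F \<subseteq> M" "e \<in> M" using xX unfolding X_def by auto
    interpret J: inst n t T "F \<union> T" "U e" "V e" "Lev e" by (rule I[OF x(2,3)])
    have "tap_instance n (Eb e) (F \<union> T) \<and> tap_feasible n (Eb e) (F \<union> T) (F \<union> T) \<and> is_stream (Eb e) (F \<union> T) (alice F @ bob e)"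
      using J.inst_ok J.feasible stream[OF x(2)] Eb_eq[OF x(2,3)] by simp
    then show ?thesis using corr unfolding ev_def x(1) by simp
  qed
  obtain A where A: "A \<in> set_pmf P" and big0: "3 * card {x\<in>X. ev A x} \<ge> 2 * card X"
    using avg_pmf[OF fX, of P ev] pr by blast
  obtain q0 step out where Aeq: "A = (q0, step, out)" by (cases A) auto
  have sbA: "q0 < 2 ^ s" "\<forall>x q. q < 2 ^ s \<longrightarrow> step x q < 2 ^ s"
    using sb A Aeq unfolding space_bounded_def by auto
  define st where "st F = fold step (alice F) q0" for F
  define g where "g q e = (out (fold step (bob e) q) < 2 * t + 1)" for q e
  have run: "run_alg A (alice F @ bob e) = out (fold step (bob e) (st F))" for F e
    unfolding run_alg_def Aeq st_def by simp
  have dec: "g (st F) e = (e \<in> F)" if "F \<subseteq> M" "e \<in> M" "ev A (F, e)" for F e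
  proof -
    interpret J: inst n t T "F \<union> T" "U e" "V e" "Lev e" by (rule I[OF that(1,2)])
    have E: "J.E = Eb e" using Eb_eq[OF that(1,2)] .
    have ee: "e = {U e, V e}" using lev[OF that(2)] by blast
    have evv: "tap_opt n (Eb e) (F \<union> T) \<le> out (fold step (bob e) (st F))"
      "out (fold step (bob e) (st F)) < (2 * t + 1) * tap_opt n (Eb e) (F \<union> T)"
      using that(3) unfolding ev_def run by auto
    show ?thesis
    proof (cases "e \<in> F")
      case True
      then have "tap_opt n (Eb e) (F \<union> T) \<le> 1" using J.opt_le1 ee E by auto
      then have "(2 * t + 1) * tap_opt n (Eb e) (F \<union> T) \<le> (2 * t + 1) * 1" by (rule mult_left_mono) simp
      then have "(2 * t + 1) * tap_opt n (Eb e) (F \<union> T) \<le> 2 * t + 1" by simp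
      with evv(2) have "out (fold step (bob e) (st F)) < 2 * t + 1" by (rule less_le_trans)
      then show ?thesis using True unfolding g_def by simp
    next
      case False
      have "e \<notin> T" using MT that(2) by auto
      then have "\<And>f x y. f \<in> F \<union> T \<Longrightarrow> f = {x, y} \<Longrightarrow> Lev e x \<le> Suc (Lev e y)"
        using lev[OF that(2)] False that(1) by blast
      then have "tap_opt n (Eb e) (F \<union> T) \<ge> Suc (2 * t)" using J.opt_ge E by auto
      then have "\<not> out (fold step (bob e) (st F)) < 2 * t + 1" using evv(1) by simp
      then show ?thesis using False unfolding g_def by simp
    qed
  qed
  have sub: "{x\<in>X. ev A x} \<subseteq> {(F, e) \<in> Pow M \<times> M. g (st F) e = (e \<in> F)}"
    unfolding X_def using dec by auto
  have "card {x\<in>X. ev A x} \<le> card {(F, e) \<in> Pow M \<times> M. g (st F) e = (e \<in> F)}"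
  proof (rule card_mono[OF _ sub])
    have "{(F, e) \<in> Pow M \<times> M. g (st F) e = (e \<in> F)} \<subseteq> Pow M \<times> M" by auto
    then show "finite {(F, e) \<in> Pow M \<times> M. g (st F) e = (e \<in> F)}"
      by (rule finite_subset) (use fM in simp)
  qed
  then have big: "3 * card {(F, e) \<in> Pow M \<times> M. g (st F) e = (e \<in> F)} \<ge> 2 * card (Pow M \<times> M)"
    using big0 unfolding X_def by linarith
  have stb: "st F < 2 ^ s" if "F \<subseteq> M" for F
    unfolding st_def using fold_bounded[OF sbA(2) sbA(1)] .
  show ?thesis by (rule count_bound[OF fM stb big])
qed


definition hadj :: "nat set set \<Rightarrow> nat \<Rightarrow> nat \<Rightarrow> bool" where
  "hadj H x y \<longleftrightarrow> {x, y} \<in> H"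

lemma hadj_sym: "hadj H x y \<Longrightarrow> hadj H y x"
  unfolding hadj_def by (simp add: insert_commute)

lemma hadj_rt_adj:
  assumes "(hadj T)\<^sup>*\<^sup>* a b"
  shows "(a, b) \<in> (adj (LinkE ` T))\<^sup>*"
  using assms
proof (induction rule: rtranclp_induct)
  case base then show ?case by simp
next
  case (step y z)
  have "LinkE {y, z} \<in> LinkE ` T" using step(2) unfolding hadj_def by simp
  then have "(y, z) \<in> adj (LinkE ` T)" unfolding adj_def mem_Collect_eq case_prod_conv
    by (rule bexI[rotated]) simp
  then show ?case using step(3) by simp
qed

lemma conn_root:
  assumes "\<And>x. x < n \<Longrightarrow> (r, x) \<in> (adj J)\<^sup>*"
  shows "connected_on {..<n} J"
  unfolding connected_on_def
proof (intro ballI)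
  fix x y assume "x \<in> {..<n}" "y \<in> {..<n}"
  then have "(r, x) \<in> (adj J)\<^sup>*" "(r, y) \<in> (adj J)\<^sup>*" using assms by auto
  then show "(x, y) \<in> (adj J)\<^sup>*" by (meson rtrancl_trans rtrancl_adj_sym)
qed

lemma chords_bound:
  fixes n t s :: nat and P :: "stream_alg pmf"
  assumes t1: "t \<ge> 1"
    and sb: "\<forall>A\<in>set_pmf P. space_bounded s A"
    and corr: "\<forall>E L xs. tap_instance n E L \<and> tap_feasible n E L L \<and> is_stream E L xs \<longrightarrow>
         measure_pmf.prob P {A. tap_opt n E L \<le> run_alg A xs \<and>
                                 run_alg A xs < (2 * t + 1) * tap_opt n E L} \<ge> 2 / 3"
  shows "(8192::nat) ^ ((n - 1) div Suc (2 * t)) \<le> 9 ^ 8 * 256 ^ s * 6561 ^ ((n - 1) div Suc (2 * t))"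
proof -
  define K where "K = Suc (2 * t)"
  have K3: "K \<ge> 3" unfolding K_def using t1 by simp
  define T2 where "T2 = (\<lambda>i. {i, Suc i}) ` {i. Suc i < n}"
  define M2 where "M2 = (\<lambda>j. {K * j, K * Suc j}) ` {..< (n - 1) div K}"
  have Kj: "K * j < K * Suc j" for j using K3 by simp
  have jn: "K * Suc j < n" if "j < (n - 1) div K" for j
  proof -
    have "Suc j \<le> (n - 1) div K" using that by simp
    then have "K * Suc j \<le> K * ((n - 1) div K)" by (rule mult_le_mono2)
    also have "\<dots> \<le> n - 1" by simp
    finally show ?thesis using K3 by (cases n) auto
  qed
  have minmax: "Min {K * j, K * Suc j} = K * j" "Max {K * j, K * Suc j} = K * Suc j" for j
    using Kj[of j] by auto
  have cardM: "card M2 = (n - 1) div K"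
  proof -
    have "inj_on (\<lambda>j. {K * j, K * Suc j}) {..< (n - 1) div K}"
    proof (rule inj_onI)
      fix j j' assume "{K * j, K * Suc j} = {K * j', K * Suc j'}"
      then have "Min {K * j, K * Suc j} = Min {K * j', K * Suc j'}" by simp
      then have "K * j = K * j'" using minmax by simp
      then show "j = j'" using K3 by simp
    qed
    then show ?thesis unfolding M2_def by (simp add: card_image)
  qed
  have MT: "M2 \<inter> T2 = {}"
  proof (rule ccontr)
    assume "M2 \<inter> T2 \<noteq> {}"
    then obtain j i where eq: "{K * j, K * Suc j} = {i, Suc i}" unfolding M2_def T2_def by blast
    then have "Min {K * j, K * Suc j} = Min {i, Suc i}" "Max {K * j, K * Suc j} = Max {i, Suc i}" by simp_all
    then have "K * j = i" "K * Suc j = Suc i" using minmax by auto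
    then show False using K3 by simp
  qed
  have Mv: "M2 \<subseteq> vpairs n"
  proof
    fix e assume "e \<in> M2"
    then obtain j where j: "j < (n - 1) div K" "e = {K * j, K * Suc j}" unfolding M2_def by auto
    have "K * j < n" "K * Suc j < n" "K * j \<noteq> K * Suc j" using jn[OF j(1)] Kj[of j] by auto
    then show "e \<in> vpairs n" unfolding vpairs_def using j(2) by blast
  qed
  have Tv: "T2 \<subseteq> vpairs n"
  proof
    fix e assume "e \<in> T2"
    then obtain i where i: "Suc i < n" "e = {i, Suc i}" unfolding T2_def by auto
    have "i < n" "i \<noteq> Suc i" using i by auto
    then show "e \<in> vpairs n" unfolding vpairs_def using i by blast
  qed
  have Tc: "connected_on {..<n} (LinkE ` T2)"
  proof (rule conn_root[of n 0])
    fix x assume "x < n"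
    then have "(hadj T2)\<^sup>*\<^sup>* 0 x"
    proof (induction x)
      case 0 then show ?case by simp
    next
      case (Suc x)
      then have "hadj T2 x (Suc x)" unfolding hadj_def T2_def by auto
      then show ?case using Suc by (meson Suc_lessD rtranclp.rtrancl_into_rtrancl)
    qed
    then show "(0, x) \<in> (adj (LinkE ` T2))\<^sup>*" by (rule hadj_rt_adj)
  qed
  define Lev where "Lev e x = min (x - Min e) K" for e :: "nat set" and x
  have lev: "e = {Min e, Max e} \<and> Min e < n \<and> Max e < n \<and> Min e \<noteq> Max e \<and> Lev e (Min e) = 0
        \<and> Lev e (Max e) \<ge> Suc (2 * t)
        \<and> (\<forall>f\<in>(M2 \<union> T2) - {e}. \<forall>x y. f = {x, y} \<longrightarrow> Lev e x \<le> Suc (Lev e y))" if eM: "e \<in> M2" for e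
  proof -
    obtain j where j: "j < (n - 1) div K" "e = {K * j, K * Suc j}" using eM unfolding M2_def by auto
    have mm: "Min e = K * j" "Max e = K * Suc j" using j minmax by auto
    have lip: "Lev e x \<le> Suc (Lev e y)" if f: "f \<in> (M2 \<union> T2) - {e}" "f = {x, y}" for f x y
    proof (cases "f \<in> T2")
      case True
      then obtain i where "f = {i, Suc i}" unfolding T2_def by auto
      then have "(x = i \<and> y = Suc i) \<or> (x = Suc i \<and> y = i)" using f(2) by (auto simp: doubleton_eq_iff)
      then show ?thesis unfolding Lev_def by auto
    next
      case False
      then obtain j' where j': "f = {K * j', K * Suc j'}" using f unfolding M2_def by auto
      have "j' \<noteq> j" using j' j f by auto
      have xy: "(x = K * j' \<and> y = K * Suc j') \<or> (x = K * Suc j' \<and> y = K * j')" using f(2) j' by (auto simp: doubleton_eq_iff)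
      show ?thesis
      proof (cases "j' < j")
        case True
        then have "K * Suc j' \<le> K * j" by (intro mult_le_mono2) simp
        moreover have "x \<le> K * Suc j'" "y \<le> K * Suc j'" using xy Kj[of j'] by auto
        ultimately have "x \<le> K * j" "y \<le> K * j" by linarith+
        then have "Lev e x = 0" "Lev e y = 0" unfolding Lev_def mm by auto
        then show ?thesis by simp
      next
        case False
        then have "Suc j \<le> j'" using \<open>j' \<noteq> j\<close> by simp
        then have "K * Suc j \<le> K * j'" by (intro mult_le_mono2)
        moreover have "x \<ge> K * j'" "y \<ge> K * j'" using xy Kj[of j'] by auto
        ultimately have "x \<ge> K * Suc j" "y \<ge> K * Suc j" by linarith+
        then have "Lev e x = K" "Lev e y = K" unfolding Lev_def mm by auto
        then show ?thesis by simp
      qed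
    qed
    have "Lev e (Max e) = K" unfolding Lev_def mm by simp
    then show ?thesis using lip mm j jn[OF j(1)] Kj[of j] K_def unfolding Lev_def by auto
  qed
  have "(8192::nat) ^ card M2 \<le> 9 ^ 8 * 256 ^ s * 6561 ^ card M2"
    by (rule machinery[OF MT Mv Tv Tc lev sb corr])
  then show ?thesis using cardM K_def by simp
qed


lemma gamma_ex:
  "\<exists>H. H \<subseteq> vpairs n \<and> girth_gt H g \<and> card H = gamma n g"
  "F \<subseteq> vpairs n \<Longrightarrow> girth_gt F g \<Longrightarrow> card F \<le> gamma n g"
proof -
  define S where "S = {card F | F. F \<subseteq> vpairs n \<and> girth_gt F g}"
  have fS: "finite S"
  proof -
    have "S \<subseteq> card ` Pow (vpairs n)" unfolding S_def by auto
    then show ?thesis using finite_vpairs by (meson finite_Pow_iff finite_imageI finite_subset)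
  qed
  have "\<not> has_cycle_of_length {} k" for k
  proof
    assume "has_cycle_of_length {} k"
    then obtain vs where "k \<ge> 3" "\<forall>i<k. {vs ! i, vs ! (Suc i mod k)} \<in> ({} :: nat set set)"
      unfolding has_cycle_of_length_def by auto
    then show False by (metis empty_iff le_trans not_less_eq_eq numeral_3_eq_3 zero_less_Suc le0 less_le_trans)
  qed
  then have "girth_gt {} g" unfolding girth_gt_def by auto
  then have neS: "S \<noteq> {}" unfolding S_def by blast
  have "Max S \<in> S" using fS neS by (rule Max_in)
  then show "\<exists>H. H \<subseteq> vpairs n \<and> girth_gt H g \<and> card H = gamma n g"
    unfolding S_def gamma_def by auto
  show "F \<subseteq> vpairs n \<Longrightarrow> girth_gt F g \<Longrightarrow> card F \<le> gamma n g"
    unfolding gamma_def using fS unfolding S_def by (auto intro!: Max_ge)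
qed

lemma mod_arith1:
  assumes "(k::nat) \<ge> 3" "i < k" "Suc l < k"
  shows "(Suc i + l) mod k \<noteq> i"
proof
  assume h: "(Suc i + l) mod k = i"
  show False
  proof (cases "Suc i + l < k")
    case True then show ?thesis using h by simp
  next
    case False
    then have "(Suc i + l) mod k = Suc i + l - k" using assms by (simp add: mod_if le_mod_geq)
    then show ?thesis using h assms False by linarith
  qed
qed

lemma mod_arith2:
  assumes "(k::nat) \<ge> 3" "i < k"
  shows "Suc ((Suc i) mod k) mod k \<noteq> i"
proof (cases "Suc i < k")
  case True
  then show ?thesis using assms by (cases "Suc (Suc i) < k") (auto simp: mod_if)
next
  case False
  then have "Suc i = k" using assms by simp
  then show ?thesis using assms by auto
qed

lemma cycle_pair_unique:
  assumes k3: "(k::nat) \<ge> 3" and len: "length vs = k" and d: "distinct vs" and i: "i < k" and j: "j < k"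
    and eq: "{vs ! j, vs ! (Suc j mod k)} = {vs ! i, vs ! (Suc i mod k)}"
  shows "j = i"
proof -
  have idx: "a < k \<Longrightarrow> b < k \<Longrightarrow> vs ! a = vs ! b \<longleftrightarrow> a = b" for a b
    using d len nth_eq_iff_index_eq by blast
  have m: "Suc j mod k < k" "Suc i mod k < k" using k3 by auto
  have "(vs ! j = vs ! i \<and> vs ! (Suc j mod k) = vs ! (Suc i mod k)) \<or>
        (vs ! j = vs ! (Suc i mod k) \<and> vs ! (Suc j mod k) = vs ! i)"
    using eq by (auto simp: doubleton_eq_iff)
  then show ?thesis
  proof (elim disjE conjE)
    assume "vs ! j = vs ! i" then show ?thesis using idx i j by blast
  next
    assume a: "vs ! j = vs ! (Suc i mod k)" and b: "vs ! (Suc j mod k) = vs ! i"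
    have "j = Suc i mod k" using idx[OF j m(2)] a by blast
    moreover have "Suc j mod k = i" using idx[OF m(1) i] b by blast
    ultimately show ?thesis using mod_arith2[OF k3 i] by simp
  qed
qed

lemma rtranclp_hadj_sym: "(hadj H)\<^sup>*\<^sup>* a b \<Longrightarrow> (hadj H)\<^sup>*\<^sup>* b a"
proof (induction rule: rtranclp_induct)
  case base then show ?case by simp
next
  case (step y z)
  then show ?case using hadj_sym by (metis converse_rtranclp_into_rtranclp)
qed

lemma extremal_conn:
  assumes Hv: "H \<subseteq> vpairs n" and gH: "girth_gt H g"
    and mx: "\<And>F. F \<subseteq> vpairs n \<Longrightarrow> girth_gt F g \<Longrightarrow> card F \<le> card H"
    and x: "x < n" and y: "y < n"
  shows "(hadj H)\<^sup>*\<^sup>* x y"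
proof (rule ccontr)
  assume nc: "\<not> (hadj H)\<^sup>*\<^sup>* x y"
  then have xy: "x \<noteq> y" by auto
  have nH: "{x, y} \<notin> H" using nc unfolding hadj_def by auto
  define H' where "H' = insert {x, y} H"
  have "{x, y} \<in> vpairs n" unfolding vpairs_def using x y xy by blast
  then have H'v: "H' \<subseteq> vpairs n" unfolding H'_def using Hv by auto
  have gH': "girth_gt H' g"
    unfolding girth_gt_def
  proof (intro allI impI notI)
    fix k assume kg: "k \<le> g" and hc: "has_cycle_of_length H' k"
    then obtain vs where k3: "k \<ge> 3" and len: "length vs = k" and d: "distinct vs"
      and pr: "\<And>i. i < k \<Longrightarrow> {vs ! i, vs ! (Suc i mod k)} \<in> H'"
      unfolding has_cycle_of_length_def by auto
    have "\<not> has_cycle_of_length H k" using gH kg unfolding girth_gt_def by auto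
    then obtain i where i: "i < k" and iH: "{vs ! i, vs ! (Suc i mod k)} \<notin> H"
      unfolding has_cycle_of_length_def using k3 len d by auto
    have ixy: "{vs ! i, vs ! (Suc i mod k)} = {x, y}" using pr[OF i] iH unfolding H'_def by auto
    define a where "a l = vs ! ((Suc i + l) mod k)" for l
    have walk: "(hadj H)\<^sup>*\<^sup>* (a 0) (a l)" if "l < k" for l
      using that
    proof (induction l)
      case 0 then show ?case by simp
    next
      case (Suc l)
      define j where "j = (Suc i + l) mod k"
      have jk: "j < k" unfolding j_def using k3 by simp
      have jn: "j \<noteq> i" unfolding j_def using mod_arith1[OF k3 i Suc(2)] .
      have nxt: "Suc j mod k = (Suc i + Suc l) mod k" unfolding j_def by (simp add: mod_Suc_eq)
      have "{vs ! j, vs ! (Suc j mod k)} \<noteq> {x, y}"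
        using cycle_pair_unique[OF k3 len d i jk] jn ixy by auto
      then have "{vs ! j, vs ! (Suc j mod k)} \<in> H" using pr[OF jk] unfolding H'_def by auto
      then have "hadj H (a l) (a (Suc l))" unfolding hadj_def a_def j_def[symmetric] nxt[symmetric] .
      then show ?case using Suc by (meson Suc_lessD rtranclp.rtrancl_into_rtrancl)
    qed
    have "a (k - 1) = vs ! i" unfolding a_def using k3 i by simp
    moreover have "a 0 = vs ! (Suc i mod k)" unfolding a_def by simp
    ultimately have r: "(hadj H)\<^sup>*\<^sup>* (vs ! (Suc i mod k)) (vs ! i)" using walk[of "k - 1"] k3 by simp
    have "(vs ! i = x \<and> vs ! (Suc i mod k) = y) \<or> (vs ! i = y \<and> vs ! (Suc i mod k) = x)"
      using ixy by (auto simp: doubleton_eq_iff)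
    then show False using r nc rtranclp_hadj_sym by metis
  qed
  have fH: "finite H" using Hv finite_vpairs finite_subset by blast
  have "card H' = Suc (card H)" unfolding H'_def using fH nH by simp
  then show False using mx[OF H'v gH'] by simp
qed


lemma rtp_last:
  assumes "rtrancl_path R a xs b" "xs \<noteq> []"
  shows "\<exists>p ys. R p b \<and> rtrancl_path R a ys p \<and> length ys = length xs - 1"
  using assms
proof (induction rule: rtrancl_path.induct)
  case (base x) then show ?case by simp
next
  case (step x y ys z)
  show ?case
  proof (cases "ys = []")
    case True
    then have "z = y" using step(2) by (auto elim: rtrancl_path.cases)
    then show ?thesis using step(1) True by (auto intro: rtrancl_path.base)
  next
    case False
    then obtain p ys' where "R p z" "rtrancl_path R y ys' p" "length ys' = length ys - 1"
      using step(3) by blast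
    then show ?thesis using step(1) False
      by (intro exI[of _ p] exI[of _ "y # ys'"]) (auto intro: rtrancl_path.step)
  qed
qed

lemma bfs_tree:
  assumes Hv: "H \<subseteq> vpairs n" and n0: "0 < n" and con: "\<And>x. x < n \<Longrightarrow> (hadj H)\<^sup>*\<^sup>* 0 x"
  shows "\<exists>T. T \<subseteq> H \<and> card T \<le> n - 1 \<and> connected_on {..<n} (LinkE ` T)"
proof -
  define dist where "dist x = (LEAST d. \<exists>xs. rtrancl_path (hadj H) 0 xs x \<and> length xs = d)" for x
  have dex: "\<exists>xs. rtrancl_path (hadj H) 0 xs x \<and> length xs = dist x" if xn: "x < n" for x
  proof -
    obtain xs where "rtrancl_path (hadj H) 0 xs x" using con[OF xn] rtranclp_eq_rtrancl_path by metis
    then have "\<exists>d xs. rtrancl_path (hadj H) 0 xs x \<and> length xs = d" by blast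
    then show ?thesis unfolding dist_def by (rule LeastI_ex)
  qed
  have dle: "dist x \<le> length xs" if "rtrancl_path (hadj H) 0 xs x" for x xs
    unfolding dist_def using that by (intro Least_le) blast
  define par where "par x = (SOME p. hadj H p x \<and> (\<exists>ys. rtrancl_path (hadj H) 0 ys p \<and> length ys = dist x - 1))" for x
  have par: "hadj H (par x) x \<and> dist (par x) < dist x" if xn: "x < n" and x0: "x \<noteq> 0" for x
  proof -
    obtain xs where xs: "rtrancl_path (hadj H) 0 xs x" "length xs = dist x" using dex[OF xn] by blast
    have "xs \<noteq> []" using xs x0 by (auto elim: rtrancl_path.cases)
    then have "\<exists>p. hadj H p x \<and> (\<exists>ys. rtrancl_path (hadj H) 0 ys p \<and> length ys = dist x - 1)"
      using rtp_last[OF xs(1)] xs(2) by auto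
    then have "hadj H (par x) x \<and> (\<exists>ys. rtrancl_path (hadj H) 0 ys (par x) \<and> length ys = dist x - 1)"
      unfolding par_def by (rule someI_ex)
    then obtain ys where "hadj H (par x) x" "rtrancl_path (hadj H) 0 ys (par x)" "length ys = dist x - 1" by blast
    moreover have "dist x \<noteq> 0" using \<open>xs \<noteq> []\<close> xs(2) by (metis length_0_conv)
    ultimately show ?thesis using dle by fastforce
  qed
  define T where "T = (\<lambda>x. {par x, x}) ` {1..<n}"
  have TH: "T \<subseteq> H" unfolding T_def using par unfolding hadj_def by auto
  have cT: "card T \<le> n - 1" unfolding T_def using card_image_le[of "{1..<n}" "\<lambda>x. {par x, x}"] by simp
  have parn: "par x < n" if "x < n" "x \<noteq> 0" for x
  proof -
    have "{par x, x} \<in> vpairs n" using par[OF that] Hv unfolding hadj_def by auto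
    then obtain a b where "a < n" "b < n" "{par x, x} = {a, b}" unfolding vpairs_def by blast
    then show ?thesis by (auto simp: doubleton_eq_iff)
  qed
  have reach: "(hadj T)\<^sup>*\<^sup>* 0 x" if "x < n" for x
    using that
  proof (induction "dist x" arbitrary: x rule: less_induct)
    case less
    show ?case
    proof (cases "x = 0")
      case True then show ?thesis by simp
    next
      case False
      have "(hadj T)\<^sup>*\<^sup>* 0 (par x)" using less(1)[of "par x"] par[OF less(2) False] parn[OF less(2) False] by blast
      moreover have "hadj T (par x) x" unfolding hadj_def T_def using less(2) False by force
      ultimately show ?thesis by (rule rtranclp.rtrancl_into_rtrancl)
    qed
  qed
  have "connected_on {..<n} (LinkE ` T)"
    by (rule conn_root[of n 0]) (use reach hadj_rt_adj in blast)
  then show ?thesis using TH cT by blast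
qed

definition levf :: "nat set set \<Rightarrow> nat set \<Rightarrow> nat \<Rightarrow> nat \<Rightarrow> nat \<Rightarrow> nat" where
  "levf H e u K x = (LEAST j. j = K \<or> (\<exists>xs. rtrancl_path (hadj (H - {e})) u xs x \<and> length xs = j))"

lemma levf_le: "levf H e u K x \<le> K"
  unfolding levf_def by (rule Least_le) simp

lemma levf_u: "levf H e u K u = 0"
proof -
  have "levf H e u K u \<le> 0" unfolding levf_def by (rule Least_le) (auto intro: rtrancl_path.base)
  then show ?thesis by simp
qed

lemma levf_ex: "levf H e u K x = K \<or> (\<exists>xs. rtrancl_path (hadj (H - {e})) u xs x \<and> length xs = levf H e u K x)"
  unfolding levf_def by (rule LeastI[of _ K]) simp

lemma levf_lip:
  assumes "f \<in> H - {e}" "f = {x, y}"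
  shows "levf H e u K x \<le> Suc (levf H e u K y)"
proof (cases "levf H e u K y = K")
  case True then show ?thesis using levf_le[of H e u K x] by simp
next
  case False
  then obtain xs where xs: "rtrancl_path (hadj (H - {e})) u xs y" "length xs = levf H e u K y"
    using levf_ex by blast
  have "hadj (H - {e}) y x" unfolding hadj_def using assms by (simp add: insert_commute)
  then have "rtrancl_path (hadj (H - {e})) y [x] x" by (auto intro: rtrancl_path.intros)
  then have "rtrancl_path (hadj (H - {e})) u (xs @ [x]) x" using xs(1) rtrancl_path_trans by metis
  then have P: "\<exists>xs'. rtrancl_path (hadj (H - {e})) u xs' x \<and> length xs' = Suc (levf H e u K y)"
    using xs(2) by (intro exI[of _ "xs @ [x]"]) simp
  show ?thesis unfolding levf_def[of H e u K x] by (rule Least_le) (use P in blast)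
qed

lemma levf_v:
  assumes gH: "girth_gt H K" and eH: "e \<in> H" and e: "e = {u, v}" and uv: "u \<noteq> v"
  shows "levf H e u K v \<ge> K"
proof (rule ccontr)
  assume "\<not> levf H e u K v \<ge> K"
  then have lt: "levf H e u K v < K" by simp
  then obtain xs where xs: "rtrancl_path (hadj (H - {e})) u xs v" "length xs = levf H e u K v"
    using levf_ex by (metis less_irrefl)
  obtain xs' where xs': "rtrancl_path (hadj (H - {e})) u xs' v" "distinct (u # xs')" "set xs' \<subseteq> set xs"
    using rtrancl_path_distinct[OF xs(1)] by blast
  have "length xs' \<le> length xs"
  proof -
    have "length xs' = card (set xs')" using xs'(2) by (simp add: distinct_card)
    also have "\<dots> \<le> card (set xs)" using xs'(3) by (simp add: card_mono)
    also have "\<dots> \<le> length xs" by (rule card_length)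
    finally show ?thesis .
  qed
  then have lenK: "Suc (length xs') \<le> K" using xs(2) lt by simp
  have ne: "xs' \<noteq> []" using xs'(1) uv by (auto elim: rtrancl_path.cases)
  have lastv: "last xs' = v" using rtrancl_path_last[OF xs'(1) ne] .
  have step: "{(u # xs') ! i, xs' ! i} \<in> H - {e}" if "i < length xs'" for i
    using rtrancl_path_nth[OF xs'(1) that] unfolding hadj_def .
  have len2: "length xs' \<ge> 2"
  proof (rule ccontr)
    assume "\<not> length xs' \<ge> 2"
    moreover have "length xs' \<noteq> 0" using ne by simp
    ultimately have "length xs' = 1" by linarith
    then obtain w where w: "xs' = [w]" by (cases xs') (auto simp: length_Suc_conv)
    then have "w = v" using lastv by simp
    then have "{u, v} \<in> H - {e}" using step[of 0] w by simp
    then show False using e by simp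
  qed
  define vs where "vs = u # xs'"
  define k where "k = length vs"
  have k: "k = Suc (length xs')" unfolding k_def vs_def by simp
  have c1: "3 \<le> k" using k len2 by simp
  have c2: "length vs = k" unfolding k_def ..
  have c3: "distinct vs" unfolding vs_def using xs'(2) .
  have c4: "\<forall>i<k. {vs ! i, vs ! (Suc i mod k)} \<in> H"
  proof (intro allI impI)
    fix i assume i: "i < k"
    show "{vs ! i, vs ! (Suc i mod k)} \<in> H"
    proof (cases "Suc i < k")
      case True
      then have "Suc i mod k = Suc i" by simp
      moreover have "i < length xs'" using True k by simp
      ultimately show ?thesis using step[of i] unfolding vs_def by simp
    next
      case False
      then have ik: "Suc i = k" using i by simp
      then have "Suc i mod k = 0" by simp
      have il: "i = length xs'" using ik k by simp
      have "vs ! i = last vs" unfolding vs_def il by (simp add: last_conv_nth)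
      also have "\<dots> = last xs'" unfolding vs_def using ne by simp
      finally have vi: "vs ! i = v" using lastv by simp
      have vu: "vs ! (Suc i mod k) = u" using \<open>Suc i mod k = 0\<close> unfolding vs_def by simp
      have "{vs ! i, vs ! (Suc i mod k)} = e" unfolding vi vu e by (rule insert_commute)
      then show ?thesis using eH by simp
    qed
  qed
  have cyc: "has_cycle_of_length H k"
    unfolding has_cycle_of_length_def by (intro conjI c1 exI[of _ vs] c2 c3 c4[unfolded Suc_eq_plus1])
  moreover have "k \<le> K" using lenK k by simp
  ultimately show False using gH unfolding girth_gt_def by blast
qed


lemma extremal_bound:
  fixes n t s :: nat and P :: "stream_alg pmf"
  assumes t1: "t \<ge> 1" and n0: "0 < n"
    and sb: "\<forall>A\<in>set_pmf P. space_bounded s A"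
    and corr: "\<forall>E L xs. tap_instance n E L \<and> tap_feasible n E L L \<and> is_stream E L xs \<longrightarrow>
         measure_pmf.prob P {A. tap_opt n E L \<le> run_alg A xs \<and>
                                 run_alg A xs < (2 * t + 1) * tap_opt n E L} \<ge> 2 / 3"
  shows "\<exists>m. real m \<ge> real (gamma n (2 * t + 1)) - real n \<and> (8192::nat) ^ m \<le> 9 ^ 8 * 256 ^ s * 6561 ^ m"
proof -
  define K where "K = 2 * t + 1"
  obtain H where Hv: "H \<subseteq> vpairs n" and gH: "girth_gt H K" and cH: "card H = gamma n K"
    using gamma_ex(1) by blast
  have mx: "card F \<le> card H" if "F \<subseteq> vpairs n" "girth_gt F K" for F
    using gamma_ex(2)[OF that] cH by simp
  have con: "(hadj H)\<^sup>*\<^sup>* 0 x" if "x < n" for x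
    using extremal_conn[OF Hv gH mx n0 that] .
  obtain T1 where T1H: "T1 \<subseteq> H" and cT: "card T1 \<le> n - 1" and Tc: "connected_on {..<n} (LinkE ` T1)"
    using bfs_tree[OF Hv n0 con] by blast
  define M1 where "M1 = H - T1"
  have fH: "finite H" using Hv finite_vpairs finite_subset by blast
  have MT: "M1 \<inter> T1 = {}" unfolding M1_def by auto
  have Mv: "M1 \<subseteq> vpairs n" unfolding M1_def using Hv by auto
  have Tv: "T1 \<subseteq> vpairs n" using T1H Hv by auto
  define Lev where "Lev e = levf H e (Min e) K" for e
  have lev: "e = {Min e, Max e} \<and> Min e < n \<and> Max e < n \<and> Min e \<noteq> Max e \<and> Lev e (Min e) = 0
        \<and> Lev e (Max e) \<ge> Suc (2 * t)
        \<and> (\<forall>f\<in>(M1 \<union> T1) - {e}. \<forall>x y. f = {x, y} \<longrightarrow> Lev e x \<le> Suc (Lev e y))" if eM: "e \<in> M1" for e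
  proof -
    have eH: "e \<in> H" using eM unfolding M1_def by auto
    then obtain a b where ab: "a < n" "b < n" "a \<noteq> b" "e = {a, b}" using Hv unfolding vpairs_def by blast
    have mm: "Min e = min a b" "Max e = max a b" unfolding ab(4) by simp_all
    have e2: "e = {Min e, Max e}" unfolding mm ab(4) by (cases "a \<le> b") (auto simp: min_def max_def)
    have ne: "Min e \<noteq> Max e" unfolding mm using ab(3) by (simp add: min_def max_def)
    have lu: "Lev e (Min e) = 0" unfolding Lev_def by (rule levf_u)
    have lv: "Lev e (Max e) \<ge> K" unfolding Lev_def by (rule levf_v[OF gH eH e2 ne])
    have lip: "\<forall>f\<in>(M1 \<union> T1) - {e}. \<forall>x y. f = {x, y} \<longrightarrow> Lev e x \<le> Suc (Lev e y)"
    proof (intro ballI allI impI)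
      fix f x y assume "f \<in> (M1 \<union> T1) - {e}" "f = {x, y}"
      then have "f \<in> H - {e}" unfolding M1_def using T1H by auto
      then show "Lev e x \<le> Suc (Lev e y)" unfolding Lev_def by (rule levf_lip) fact
    qed
    have "Min e < n" "Max e < n" unfolding mm using ab by auto
    moreover have "Lev e (Max e) \<ge> Suc (2 * t)" using lv K_def by simp
    ultimately show ?thesis using e2 ne lu lip by blast
  qed
  have b: "(8192::nat) ^ card M1 \<le> 9 ^ 8 * 256 ^ s * 6561 ^ card M1"
    by (rule machinery[OF MT Mv Tv Tc lev sb corr])
  have "card M1 = card H - card T1" unfolding M1_def using T1H fH by (simp add: card_Diff_subset finite_subset)
  then have "real (card M1) \<ge> real (gamma n (2 * t + 1)) - real n" using cT cH K_def by simp
  then show ?thesis using b by blast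
qed

lemma to_log:
  assumes "(8192::nat) ^ m \<le> 9 ^ 8 * 256 ^ s * 6561 ^ m"
  shows "real s * ln 256 \<ge> real m * (ln 8192 - ln 6561) - ln 43046721"
proof -
  have "real ((8192::nat) ^ m) \<le> real (9 ^ 8 * 256 ^ s * 6561 ^ m)" using assms by (simp only: of_nat_le_iff)
  then have r: "(8192::real) ^ m \<le> 9 ^ 8 * 256 ^ s * 6561 ^ m" by simp
  have "ln ((8192::real) ^ m) \<le> ln (9 ^ 8 * 256 ^ s * 6561 ^ m)" using r by simp
  also have "\<dots> = ln 43046721 + real s * ln 256 + real m * ln 6561" by (simp add: ln_mult ln_realpow)
  finally have "real m * ln 8192 \<le> ln 43046721 + real s * ln 256 + real m * ln 6561" by (simp add: ln_realpow)
  then show ?thesis by (simp add: algebra_simps)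
qed


theorem mainTheorem8:
  fixes t :: nat
  assumes "t \<ge> 1"
  shows "\<exists>c::real. c > 0 \<and> (\<exists>N. \<forall>n\<ge>N. \<forall>(s::nat) (P::stream_alg pmf).
     ((\<forall>A\<in>set_pmf P. space_bounded s A) \<and>
      (\<forall>E L xs. tap_instance n E L \<and> tap_feasible n E L L \<and> is_stream E L xs \<longrightarrow>
         measure_pmf.prob P {A. tap_opt n E L \<le> run_alg A xs \<and>
                                 run_alg A xs < (2 * t + 1) * tap_opt n E L} \<ge> 2 / 3))
     \<longrightarrow> real s \<ge> c * real (gamma n (2 * t + 1)))"
proof -
  define \<alpha> where "\<alpha> = ln 8192 - ln (6561::real)"
  define \<beta> where "\<beta> = ln (43046721::real)"
  define lam where "lam = ln (256::real)"
  define K where "K = real (2 * t + 1)"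
  have ap: "\<alpha> > 0" unfolding \<alpha>_def by simp
  have lp: "lam > 0" unfolding lam_def by simp
  have bp: "\<beta> \<ge> 0" unfolding \<beta>_def by simp
  have K3: "K \<ge> 3" unfolding K_def using assms by simp
  define c where "c = \<alpha> / (4 * K * lam)"
  define N where "N = nat \<lceil>(2 * K * (\<alpha> + \<beta>) + 2 * \<beta>) / \<alpha>\<rceil> + 2"
  have cpos: "c > 0" unfolding c_def using ap lp K3 by simp
  have main: "real s \<ge> c * real (gamma n (2 * t + 1))"
    if nN: "n \<ge> N" and sb: "\<forall>A\<in>set_pmf P. space_bounded s A"
      and corr: "\<forall>E L xs. tap_instance n E L \<and> tap_feasible n E L L \<and> is_stream E L xs \<longrightarrow>
         measure_pmf.prob P {A. tap_opt n E L \<le> run_alg A xs \<and>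
                                 run_alg A xs < (2 * t + 1) * tap_opt n E L} \<ge> 2 / 3"
    for n s and P :: "stream_alg pmf"
  proof -
    define g where "g = real (gamma n (2 * t + 1))"
    define S where "S = real s * lam"
    have n0: "0 < n" using nN unfolding N_def by simp
    have "real n \<ge> (2 * K * (\<alpha> + \<beta>) + 2 * \<beta>) / \<alpha>"
    proof -
      have "real N \<ge> (2 * K * (\<alpha> + \<beta>) + 2 * \<beta>) / \<alpha>" unfolding N_def by linarith
      then show ?thesis using nN by linarith
    qed
    then have an: "\<alpha> * real n \<ge> 2 * K * (\<alpha> + \<beta>) + 2 * \<beta>" using ap by (simp add: field_simps)
    obtain m1 where m1: "real m1 \<ge> g - real n" and b1: "(8192::nat) ^ m1 \<le> 9 ^ 8 * 256 ^ s * 6561 ^ m1"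
      using extremal_bound[OF assms n0 sb corr] unfolding g_def by blast
    have S1: "S \<ge> \<alpha> * real m1 - \<beta>" using to_log[OF b1] unfolding S_def \<alpha>_def \<beta>_def lam_def by (simp add: mult.commute)
    define m2 where "m2 = (n - 1) div Suc (2 * t)"
    have b2: "(8192::nat) ^ m2 \<le> 9 ^ 8 * 256 ^ s * 6561 ^ m2"
      unfolding m2_def using chords_bound[OF assms sb corr] .
    have S2: "S \<ge> \<alpha> * real m2 - \<beta>" using to_log[OF b2] unfolding S_def \<alpha>_def \<beta>_def lam_def by (simp add: mult.commute)
    have Km2: "K * real m2 \<ge> real n - K"
    proof -
      have "(n - 1) = Suc (2 * t) * m2 + (n - 1) mod Suc (2 * t)" unfolding m2_def by (rule div_mult_mod_eq[symmetric, unfolded mult.commute[of "_ div _"]])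
      moreover have "(n - 1) mod Suc (2 * t) < Suc (2 * t)" by simp
      ultimately have "n \<le> Suc (2 * t) * m2 + Suc (2 * t)" using n0 by linarith
      then have "real n \<le> real (Suc (2 * t)) * real m2 + real (Suc (2 * t))"
        by (metis of_nat_add of_nat_le_iff of_nat_mult)
      then show ?thesis unfolding K_def by simp
    qed
    have goal: "4 * K * S \<ge> \<alpha> * g"
    proof (cases "g \<ge> 2 * real n")
      case True
      have "\<alpha> * real m1 \<ge> \<alpha> * (g - real n)" using m1 ap by (intro mult_left_mono) auto
      then have f1: "\<alpha> * real m1 \<ge> \<alpha> * g - \<alpha> * real n" by (simp add: algebra_simps)
      have "\<alpha> * g \<ge> \<alpha> * (2 * real n)" using True ap by (intro mult_left_mono) auto
      then have f2: "\<alpha> * g \<ge> 2 * (\<alpha> * real n)" by simp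
      have f3: "K * \<alpha> + K * \<beta> \<ge> 0" using K3 ap bp by simp
      have f4: "\<alpha> * real n \<ge> 2 * (K * \<alpha>) + 2 * (K * \<beta>) + 2 * \<beta>" using an by (simp add: algebra_simps)
      have Sg: "4 * S \<ge> \<alpha> * g" "S \<ge> 0" using S1 f1 f2 f3 f4 bp by linarith+
      have "(K - 1) * S \<ge> 0" using K3 Sg(2) by simp
      then have "4 * K * S \<ge> 4 * S" by (simp add: algebra_simps)
      then show ?thesis using Sg by linarith
    next
      case False
      have "\<alpha> * g \<le> \<alpha> * (2 * real n)" using False ap by (intro mult_left_mono) auto
      then have ag: "\<alpha> * g \<le> 2 * (\<alpha> * real n)" by simp
      have "K * S \<ge> K * (\<alpha> * real m2 - \<beta>)" using S2 K3 by (intro mult_left_mono) auto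
      then have h1: "K * S \<ge> \<alpha> * (K * real m2) - K * \<beta>" by (simp add: algebra_simps)
      have "\<alpha> * (K * real m2) \<ge> \<alpha> * (real n - K)" using Km2 ap by (intro mult_left_mono) auto
      then have h2: "\<alpha> * (K * real m2) \<ge> \<alpha> * real n - K * \<alpha>" by (simp add: algebra_simps)
      have f4: "\<alpha> * real n \<ge> 2 * (K * \<alpha>) + 2 * (K * \<beta>) + 2 * \<beta>" using an by (simp add: algebra_simps)
      have "4 * (K * S) \<ge> \<alpha> * g" using h1 h2 f4 ag bp by linarith
      then show ?thesis by (simp add: algebra_simps)
    qed
    have "c * g = (\<alpha> * g) / (4 * K * lam)" unfolding c_def by simp
    also have "\<dots> \<le> (4 * K * S) / (4 * K * lam)" using goal K3 lp by (intro divide_right_mono) auto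
    also have "\<dots> = real s" unfolding S_def using K3 lp by simp
    finally show ?thesis unfolding g_def .
  qed
  show ?thesis
    by (intro exI[of _ c] conjI cpos exI[of _ N] allI impI) (use main in blast)
qed


end
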